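(* Let $u=0$ and $\theta\in(1/2,1]$, and let $m\in\mathbb N$ be arbitrary. Then the region of unconditional stability satisfies $$D=D_{-\infty}=\{\mu\in\mathbb C:\ |\mu|<1\}.$$ In particular $D(0,1)\subseteq D_y$ for every $y<0$.
   Context: Fix $\theta\in[0,1]$, $u\in[0,1)$, $m\in\mathbb N$, and define the polynomials $a(z)=z^{m+1}-z^m$, $b(z)=\theta(uz^2+(1-u)z)+(1-\theta)(uz+(1-u))$, $c(z)=\theta z^{m+1}+(1-\theta)z^m$. For $y<0$ and $\mu\in\mathbb C$, the equation $a(\xi)=y\,c(\xi)-y\mu\,b(\xi)$ in the unknown $\xi\in\mathbb C$ is called stable if all its roots satisfy $|\xi|<1$. For $y=-\infty$ it is called stable if all roots of $c(\xi)-\mu\,b(\xi)=0$ satisfy $|\xi|<1$. For $y\in(-\infty,0)\cup\{-\infty\}$ let $D_y=\{\mu\in\mathbb C:$ the equation is stable for $y\}$, and let $D=\bigcap_{y\in(-\infty,0)\cup\{-\infty\}}D_y$ (region of unconditional stability). $D(0,1)$ denotes the open unit disk. *)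

theory Defs
  imports "HOL-Analysis.Analysis"
begin

definition pa :: "nat \<Rightarrow> complex \<Rightarrow> complex" where
  "pa m z = z ^ (m + 1) - z ^ m"

definition pb :: "real \<Rightarrow> real \<Rightarrow> complex \<Rightarrow> complex" where
  "pb \<theta> u z = of_real \<theta> * (of_real u * z ^ 2 + of_real (1 - u) * z)
               + of_real (1 - \<theta>) * (of_real u * z + of_real (1 - u))"

definition pc :: "real \<Rightarrow> nat \<Rightarrow> complex \<Rightarrow> complex" where
  "pc \<theta> m z = of_real \<theta> * z ^ (m + 1) + of_real (1 - \<theta>) * z ^ m"

definition stable_fin :: "real \<Rightarrow> real \<Rightarrow> nat \<Rightarrow> real \<Rightarrow> complex \<Rightarrow> bool" where
  "stable_fin \<theta> u m y \<mu> \<longleftrightarrow>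
     (\<forall>\<xi>. pa m \<xi> = of_real y * pc \<theta> m \<xi> - of_real y * \<mu> * pb \<theta> u \<xi> \<longrightarrow> norm \<xi> < 1)"

definition stable_inf :: "real \<Rightarrow> real \<Rightarrow> nat \<Rightarrow> complex \<Rightarrow> bool" where
  "stable_inf \<theta> u m \<mu> \<longleftrightarrow>
     (\<forall>\<xi>. pc \<theta> m \<xi> - \<mu> * pb \<theta> u \<xi> = 0 \<longrightarrow> norm \<xi> < 1)"

definition D_fin :: "real \<Rightarrow> real \<Rightarrow> nat \<Rightarrow> real \<Rightarrow> complex set" where
  "D_fin \<theta> u m y = {\<mu>. stable_fin \<theta> u m y \<mu>}"

definition D_inf :: "real \<Rightarrow> real \<Rightarrow> nat \<Rightarrow> complex set" where
  "D_inf \<theta> u m = {\<mu>. stable_inf \<theta> u m \<mu>}"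

definition D_unc :: "real \<Rightarrow> real \<Rightarrow> nat \<Rightarrow> complex set" where
  "D_unc \<theta> u m = D_inf \<theta> u m \<inter> (\<Inter>y\<in>{y::real. y < 0}. D_fin \<theta> u m y)"

end

theory Submission
  imports Defs
begin

lemma root_ex: fixes \<mu> :: complex assumes "m \<ge> 1" shows "\<exists>\<xi>. \<xi> ^ m = \<mu>"
proof (cases "\<mu> = 0")
  case True then show ?thesis using assms by (intro exI[of _ 0]) (simp add: power_0_left)
next
  case False
  have "exp (Ln \<mu> / of_nat m) ^ m = exp (of_nat m * (Ln \<mu> / of_nat m))"
    by (rule exp_of_nat_mult[symmetric])
  also have "\<dots> = \<mu>" using assms False by simp
  finally show ?thesis by blast
qed

lemma pb0: "pb \<theta> 0 z = of_real \<theta> * z + of_real (1 - \<theta>)"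
  by (simp add: pb_def)

lemma pc_eq: "pc \<theta> m z = z ^ m * (of_real \<theta> * z + of_real (1 - \<theta>))"
  by (simp add: pc_def algebra_simps)

lemma L_root:
  assumes "1/2 < \<theta>" "\<theta> \<le> 1" "of_real \<theta> * \<xi> + of_real (1 - \<theta>) = (0::complex)"
  shows "norm \<xi> < 1"
proof -
  have "\<theta> > 0" using assms by simp
  have "\<xi> = - of_real ((1 - \<theta>) / \<theta>)" using assms(3) \<open>\<theta> > 0\<close>
  proof -
    have h: "of_real \<theta> * \<xi> = - of_real (1 - \<theta>)" using assms(3) by (metis add_eq_0_iff2 add.commute)
    have "\<xi> = (of_real \<theta> * \<xi>) / of_real \<theta>" using \<open>\<theta> > 0\<close> by simp
    also have "\<dots> = - of_real ((1 - \<theta>) / \<theta>)" unfolding h by (simp add: divide_simps)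
    finally show ?thesis .
  qed
  hence "norm \<xi> = \<bar>(1 - \<theta>) / \<theta>\<bar>" by (simp only: norm_minus_cancel norm_of_real)
  also have "\<dots> < 1" using assms by (simp add: abs_if field_simps)
  finally show ?thesis .
qed

lemma fin_stable:
  assumes th: "1/2 < \<theta>" "\<theta> \<le> 1" and y: "y < 0" and mu: "norm \<mu> < 1"
  shows "stable_fin \<theta> 0 m y \<mu>"
  unfolding stable_fin_def
proof (intro allI impI)
  fix \<xi> :: complex
  assume eq0: "pa m \<xi> = of_real y * pc \<theta> m \<xi> - of_real y * \<mu> * pb \<theta> 0 \<xi>"
  show "norm \<xi> < 1"
  proof (rule ccontr)
    assume "\<not> norm \<xi> < 1"
    hence r1: "norm \<xi> \<ge> 1" by simp
    define L where "L = of_real \<theta> * \<xi> + of_real (1 - \<theta>)"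
    define p where "p = \<xi> ^ m"
    have "L \<noteq> 0" using L_root[OF th] r1 L_def by force
    have np: "norm p \<ge> 1" unfolding p_def norm_power using r1 by (simp add: one_le_power)
    have eq: "p * (\<xi> - 1) = of_real y * L * (p - \<mu>)"
      using eq0 unfolding pa_def pc_eq pb0 L_def p_def by (simp add: algebra_simps)
    hence "(p * (\<xi> - 1)) * (cnj p * cnj L) = (of_real y * L * (p - \<mu>)) * (cnj p * cnj L)" by simp
    hence eq2: "(p * cnj p) * ((\<xi> - 1) * cnj L) = of_real y * (L * cnj L) * (p * cnj p - \<mu> * cnj p)"
      by (simp add: algebra_simps)
    have A: "Re ((\<xi> - 1) * cnj L) \<ge> 0"
    proof -
      have e: "Re ((\<xi> - 1) * cnj L) = \<theta> * (norm \<xi>)^2 + (1 - 2*\<theta>) * Re \<xi> - (1 - \<theta>)"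
        unfolding L_def cmod_power2 by (simp add: algebra_simps power2_eq_square)
      have "Re \<xi> \<le> norm \<xi>" by (rule complex_Re_le_cmod)
      hence "(1 - 2*\<theta>) * Re \<xi> \<ge> (1 - 2*\<theta>) * norm \<xi>" using th by (intro mult_left_mono_neg) auto
      moreover have "\<theta> * (norm \<xi>)^2 + (1 - 2*\<theta>) * norm \<xi> - (1 - \<theta>) = (norm \<xi> - 1) * (\<theta> * norm \<xi> + 1 - \<theta>)"
        by (simp add: algebra_simps power2_eq_square)
      moreover have "(norm \<xi> - 1) * (\<theta> * norm \<xi> + 1 - \<theta>) \<ge> 0" proof (intro mult_nonneg_nonneg)
        have "\<theta> * norm \<xi> \<ge> \<theta> * 1" using r1 th by (intro mult_left_mono) auto
        thus "0 \<le> \<theta> * norm \<xi> + 1 - \<theta>" by simp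
      qed (use r1 in simp)
      ultimately show ?thesis using e by linarith
    qed
    have pc: "p * cnj p = of_real ((norm p)^2)" by (rule complex_norm_square[symmetric])
    have Lc: "L * cnj L = of_real ((norm L)^2)" by (rule complex_norm_square[symmetric])
    have B: "Re (p * cnj p - \<mu> * cnj p) > 0"
    proof -
      have "Re (\<mu> * cnj p) \<le> norm (\<mu> * cnj p)" by (rule complex_Re_le_cmod)
      also have "\<dots> = norm \<mu> * norm p" by (simp add: norm_mult)
      also have "\<dots> < norm p * norm p" using mu np by (intro mult_strict_right_mono) auto
      finally show ?thesis unfolding pc by (simp add: power2_eq_square)
    qed
    have "Re ((p * cnj p) * ((\<xi> - 1) * cnj L)) = (norm p)^2 * Re ((\<xi> - 1) * cnj L)"
      unfolding pc by simp
    also have "\<dots> \<ge> 0" using A by simp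
    finally have g: "Re ((p * cnj p) * ((\<xi> - 1) * cnj L)) \<ge> 0" .
    have "Re (of_real y * (L * cnj L) * (p * cnj p - \<mu> * cnj p)) = y * (norm L)^2 * Re (p * cnj p - \<mu> * cnj p)"
      unfolding Lc by simp
    also have "\<dots> < 0" using y B \<open>L \<noteq> 0\<close> by (simp add: mult_neg_pos)
    finally show False using g eq2 by simp
  qed
qed

lemma Dinf: assumes th: "1/2 < \<theta>" "\<theta> \<le> 1" and m: "m \<ge> 1"
  shows "D_inf \<theta> 0 m = ball 0 1"
proof (intro set_eqI iffI)
  fix \<mu> assume "\<mu> \<in> D_inf \<theta> 0 m"
  hence st: "stable_inf \<theta> 0 m \<mu>" by (simp add: D_inf_def)
  obtain \<xi> where x: "\<xi> ^ m = \<mu>" using root_ex[OF m] by blast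
  have "pc \<theta> m \<xi> - \<mu> * pb \<theta> 0 \<xi> = 0" unfolding pc_eq pb0 x by simp
  hence "norm \<xi> < 1" using st by (simp add: stable_inf_def)
  hence "norm \<mu> < 1" unfolding x[symmetric] norm_power using m
    by (simp add: power_less_one_iff)
  thus "\<mu> \<in> ball 0 1" by simp
next
  fix \<mu> :: complex assume "\<mu> \<in> ball 0 1"
  hence mu: "norm \<mu> < 1" by simp
  have "stable_inf \<theta> 0 m \<mu>" unfolding stable_inf_def
  proof (intro allI impI)
    fix \<xi> assume "pc \<theta> m \<xi> - \<mu> * pb \<theta> 0 \<xi> = 0"
    hence "(of_real \<theta> * \<xi> + of_real (1 - \<theta>)) * (\<xi> ^ m - \<mu>) = 0"
      unfolding pc_eq pb0 by (simp add: algebra_simps)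
    hence "of_real \<theta> * \<xi> + of_real (1 - \<theta>) = 0 \<or> \<xi> ^ m = \<mu>" by simp
    thus "norm \<xi> < 1"
    proof
      assume "\<xi> ^ m = \<mu>"
      hence "norm (\<xi> ^ m) < 1" using mu by simp
      hence "norm \<xi> ^ m < 1" by (simp only: norm_power)
      thus ?thesis using m by (simp add: power_less_one_iff)
    qed (rule L_root[OF th])
  qed
  thus "\<mu> \<in> D_inf \<theta> 0 m" by (simp add: D_inf_def)
qed

theorem mainTheorem2:
  fixes \<theta> :: real and m :: nat
  assumes "1/2 < \<theta>" and "\<theta> \<le> 1" and "m \<ge> 1"
  shows "D_unc \<theta> 0 m = D_inf \<theta> 0 m \<and> D_inf \<theta> 0 m = ball 0 1
         \<and> (\<forall>y::real. y < 0 \<longrightarrow> ball 0 1 \<subseteq> D_fin \<theta> 0 m y)"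
proof -
  have F: "\<forall>y::real. y < 0 \<longrightarrow> ball 0 1 \<subseteq> D_fin \<theta> 0 m y"
    using fin_stable[OF assms(1,2)] by (auto simp: D_fin_def)
  have I: "D_inf \<theta> 0 m = ball 0 1" by (rule Dinf[OF assms])
  have "D_unc \<theta> 0 m = D_inf \<theta> 0 m" unfolding D_unc_def using F I by blast
  with F I show ?thesis by blast
qed

end
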